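(* Let the sequences be generated by SONATA in the setting below, under the additional assumptions (A1) $\|\nabla F(\mathbf{x})\|\le L_F<\infty$ for all $\mathbf{x}\in X$, (A2) every subgradient $\boldsymbol\xi\in\partial G(\mathbf{x})$ satisfies $\|\boldsymbol\xi\|\le L_G<\infty$ for all $\mathbf{x}\in X$, and (A3) $\gamma^k\in(0,1]$ with $\sum_k\gamma^k=\infty$, $\sum_k(\gamma^k)^2<\infty$. Then for all $i=1,\dots,I$: (a) $\phi_{lb}\mathbf{1}\le\boldsymbol\phi^k\le\phi_{ub}\mathbf{1}$ for all $k$, with $\phi_{lb}\ge\kappa^{2(I-1)B}>0$ and $\phi_{ub}\le I-\kappa^{2(I-1)B}$; (b) $\sup_k\|\mathbf{y}_{(i)}^k-\bar{\mathbf{y}}_\phi^k\|<\infty$; (c) $\sup_k\|\mathbf{x}_{(i)}^k-\widetilde{\mathbf{x}}_i^k\|<\infty$.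
   Context: Problem: minimize $V(\mathbf{x})\triangleq F(\mathbf{x})+G(\mathbf{x})$, $F=\sum_{i=1}^If_i$, over $\mathbf{x}\in X$, where $X\subseteq\mathbb{R}^m$ is nonempty closed convex; each $f_i:O\to\mathbb{R}$ is $C^1$ on an open set $O\supseteq X$ with $\nabla f_i$ $L_i$-Lipschitz on $X$; $G:O\to\mathbb{R}$ is convex; $V$ is bounded below on $X$. Network: digraphs $G^k=(\{1,\dots,I\},E^k)$, $(j,i)\in E^k$ meaning $j$ can send to $i$, $B$-strongly connected ($\bigcup_{t=k}^{k+B-1}E^t$ strongly connected for every $k$). $\mathbf{A}^k=(a_{ij}^k)$: $a_{ij}^k=0$ if $j\ne i$ and $(j,i)\notin E^k$, $a_{ij}^k\ge\kappa$ if $(j,i)\in E^k$, $a_{ii}^k\ge\kappa$ ($\kappa>0$), nonnegative with $\mathbf{1}^T\mathbf{A}^k=\mathbf{1}^T$. Assumption III.14 on $\widetilde f_i:O\times O\to\mathbb{R}$: $\widetilde f_i(\cdot|\mathbf{x})$ is $\tau_i$-strongly convex on $X$ for all $\mathbf{x}\in X$; $C^1$ on $O$ with $\nabla\widetilde f_i(\mathbf{x}|\mathbf{x})=\nabla f_i(\mathbf{x})$; $\nabla\widetilde f_i(\mathbf{x}|\cdot)$ is $\widetilde L_i$-Lipschitz on $X$. SONATA: initialize $\mathbf{x}_{(i)}^0\in X$, $\phi_{(i)}^0=1$, $\mathbf{y}_{(i)}^0=\nabla f_i(\mathbf{x}_{(i)}^0)$; at iteration $k$, $\widetilde{\mathbf{x}}_i^k=\operatorname{argmin}_{\mathbf{x}\in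 X}\{\widetilde f_i(\mathbf{x}|\mathbf{x}_{(i)}^k)+(I\mathbf{y}_{(i)}^k-\nabla f_i(\mathbf{x}_{(i)}^k))^T(\mathbf{x}-\mathbf{x}_{(i)}^k)+G(\mathbf{x})\}$, $\mathbf{x}_{(i)}^{k+1/2}=\mathbf{x}_{(i)}^k+\gamma^k(\widetilde{\mathbf{x}}_i^k-\mathbf{x}_{(i)}^k)$, $\phi_{(i)}^{k+1}=\sum_ja_{ij}^k\phi_{(j)}^k$, $\mathbf{x}_{(i)}^{k+1}=\frac{1}{\phi_{(i)}^{k+1}}\sum_ja_{ij}^k\phi_{(j)}^k\mathbf{x}_{(j)}^{k+1/2}$, $\mathbf{y}_{(i)}^{k+1}=\frac{1}{\phi_{(i)}^{k+1}}\sum_ja_{ij}^k\phi_{(j)}^k\mathbf{y}_{(j)}^k+\frac{1}{\phi_{(i)}^{k+1}}(\nabla f_i(\mathbf{x}_{(i)}^{k+1})-\nabla f_i(\mathbf{x}_{(i)}^k))$. $\boldsymbol\phi^k=(\phi_{(i)}^k)_i$, $\phi_{lb}=\inf_k\min_i\phi_{(i)}^k$, $\phi_{ub}=\sup_k\max_i\phi_{(i)}^k$, $\bar{\mathbf{y}}_\phi^k\triangleq\frac1I\sum_j\phi_{(j)}^k\mathbf{y}_{(j)}^k$. *)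

theory Defs
  imports "HOL-Analysis.Analysis"
begin

definition strongly_convex_on :: "'a::real_inner set \<Rightarrow> real \<Rightarrow> ('a \<Rightarrow> real) \<Rightarrow> bool" where
  "strongly_convex_on S tau g \<longleftrightarrow> convex_on S (\<lambda>z. g z - tau / 2 * (norm z)\<^sup>2)"

definition subdiff :: "'a::real_inner set \<Rightarrow> ('a \<Rightarrow> real) \<Rightarrow> 'a \<Rightarrow> 'a set" where
  "subdiff U G x = {\<xi>. \<forall>z\<in>U. G z \<ge> G x + \<xi> \<bullet> (z - x)}"

text \<open>A digraph with vertex set V and edge set R (pair (j,i) = edge from j to i) is strongly connected.\<close>
definition strongly_connected_digraph :: "'v set \<Rightarrow> ('v \<times> 'v) set \<Rightarrow> bool" where
  "strongly_connected_digraph V R \<longleftrightarrow> (\<forall>i\<in>V. \<forall>j\<in>V. (i, j) \<in> (R \<inter> V \<times> V)\<^sup>*)"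

definition B_strongly_connected :: "nat \<Rightarrow> nat \<Rightarrow> (nat \<Rightarrow> (nat \<times> nat) set) \<Rightarrow> bool" where
  "B_strongly_connected I B E \<longleftrightarrow>
     (\<forall>k. strongly_connected_digraph {1..I} (\<Union>t\<in>{k..k + B - 1}. E t))"

end

theory Submission
  imports Defs
begin


lemma subgrad_exists:
  fixes G :: "'a::euclidean_space \<Rightarrow> real"
  assumes cG: "convex_on U G" and oU: "open U" and xU: "x \<in> U"
  shows "\<exists>\<xi>. \<forall>z\<in>U. G z \<ge> G x + \<xi> \<bullet> (z - x)"
proof -
  let ?E = "epigraph U G"
  have cE: "convex ?E" using cG convex_epigraph by blast
  have inE: "(x, G x) \<in> ?E" using xU by (simp add: mem_epigraph)
  have notin: "(x, G x) \<notin> rel_interior ?E"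
  proof
    assume "(x, G x) \<in> rel_interior ?E"
    then obtain e where e: "e > 0" "cball (x, G x) e \<inter> affine hull ?E \<subseteq> ?E"
      unfolding rel_interior_cball by blast
    have p1: "(x, G x + 1) \<in> ?E" using xU by (simp add: mem_epigraph)
    have h1: "(1 + e) *\<^sub>R (x, G x) + (- e) *\<^sub>R (x, G x + 1) \<in> affine hull ?E"
      by (rule mem_affine[OF affine_affine_hull hull_inc[OF inE] hull_inc[OF p1]]) simp
    have h2: "(1 + e) *\<^sub>R (x, G x) + (- e) *\<^sub>R (x, G x + 1) = (x, G x - e)"
      by (simp add: algebra_simps)
    have m1: "(x, G x - e) \<in> affine hull ?E" using h1 unfolding h2 .
    have h3: "(x, G x - e) \<in> cball (x, G x) e"
      using e(1) by (simp add: dist_Pair_Pair)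
    have "(x, G x - e) \<in> ?E" using e(2) m1 h3 by blast
    then show False using e(1) by (simp add: mem_epigraph)
  qed
  obtain a where a: "a \<noteq> 0" "\<And>y. y \<in> ?E \<Longrightarrow> a \<bullet> (x, G x) \<le> a \<bullet> y"
    "\<And>y. y \<in> rel_interior ?E \<Longrightarrow> a \<bullet> (x, G x) < a \<bullet> y"
    by (rule supporting_hyperplane_rel_boundary[OF cE inE notin]) (rule that; assumption)
  obtain a1 a0 where aa: "a = (a1, a0)" by fastforce
  have key: "a1 \<bullet> x + a0 * G x \<le> a1 \<bullet> z + a0 * r" if "z \<in> U" "G z \<le> r" for z r
    using a(2)[of "(z, r)"] that aa by (simp add: mem_epigraph)
  have "a0 \<ge> 0" using key[OF xU, of "G x + 1"] by (simp add: algebra_simps)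
  moreover have "a0 \<noteq> 0"
  proof
    assume a00: "a0 = 0"
    hence a1: "a1 \<noteq> 0" using a(1) aa by (auto simp: zero_prod_def)
    obtain t where t: "t > 0" "cball x t \<subseteq> U" using oU xU open_contains_cball by blast
    define z where "z = x - (t / norm a1) *\<^sub>R a1"
    have "z \<in> cball x t" using t a1 by (simp add: z_def dist_norm)
    hence "z \<in> U" using t by auto
    hence "a1 \<bullet> x \<le> a1 \<bullet> z" using key[of z "G z"] a00 by simp
    also have "a1 \<bullet> z = a1 \<bullet> x - t * norm a1"
      using a1 by (simp add: z_def inner_diff_right power2_norm_eq_inner[symmetric] power2_eq_square)
    finally have "a1 \<bullet> x \<le> a1 \<bullet> x - t * norm a1" .
    moreover have "t * norm a1 > 0" using t a1 by simp
    ultimately show False by linarith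
  qed
  ultimately have a0p: "a0 > 0" by simp
  show ?thesis
  proof (intro exI ballI)
    fix z assume z: "z \<in> U"
    have "a1 \<bullet> x + a0 * G x \<le> a1 \<bullet> z + a0 * G z" using key[OF z] by simp
    hence "a0 * G x + a1 \<bullet> (x - z) \<le> a0 * G z" by (simp add: inner_diff_right)
    hence "G x + (1/a0) * (a1 \<bullet> (x - z)) \<le> G z" using a0p
      by (simp add: field_simps)
    thus "G x + (- (1 / a0) *\<^sub>R a1) \<bullet> (z - x) \<le> G z"
      by (simp add: inner_diff_right inner_diff_left algebra_simps)
  qed
qed

lemma norm_sq_comb:
  fixes a b :: "'a::real_inner"
  assumes "u + v = 1"
  shows "(norm (u *\<^sub>R a + v *\<^sub>R b))\<^sup>2 = u * (norm a)\<^sup>2 + v * (norm b)\<^sup>2 - u * v * (norm (a - b))\<^sup>2"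
proof -
  have v: "v = 1 - u" using assms by simp
  show ?thesis unfolding v
    apply (simp only: power2_norm_eq_inner inner_add_left inner_add_right inner_diff_left inner_diff_right
        inner_scaleR_left inner_scaleR_right)
    apply (simp only: inner_commute[of b a])
    by algebra
qed

lemma grad_ineq:
  fixes g :: "'a::real_inner \<Rightarrow> real"
  assumes cg: "convex_on X g" and x: "x \<in> X" and z: "z \<in> X"
    and d: "(g has_derivative (\<lambda>h. D \<bullet> h)) (at x)"
  shows "g z \<ge> g x + D \<bullet> (z - x)"
proof -
  define v where "v = z - x"
  have "((\<lambda>t. x + t *\<^sub>R v) has_derivative (\<lambda>h. h *\<^sub>R v)) (at 0)"
    by (auto intro!: derivative_eq_intros)
  moreover have "(g has_derivative (\<lambda>h. D \<bullet> h)) (at ((\<lambda>t. x + t *\<^sub>R v) 0))" using d by simp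
  ultimately have "((\<lambda>t. g (x + t *\<^sub>R v)) has_derivative (\<lambda>h. D \<bullet> (h *\<^sub>R v))) (at 0)"
    by (rule has_derivative_compose)
  from this
  have "((\<lambda>t. g (x + t *\<^sub>R v)) has_derivative (\<lambda>h. D \<bullet> (h *\<^sub>R v))) (at 0)" .
  hence "((\<lambda>t. g (x + t *\<^sub>R v)) has_field_derivative (D \<bullet> v)) (at 0)"
    unfolding has_field_derivative_def by (simp add: mult.commute[of _ "D \<bullet> v"])
  hence lim: "((\<lambda>t. (g (x + t *\<^sub>R v) - g x) / t) \<longlongrightarrow> D \<bullet> v) (at_right 0)"
    unfolding has_field_derivative_iff by (auto intro: tendsto_mono at_le)
  have ev: "eventually (\<lambda>t. (g (x + t *\<^sub>R v) - g x) / t \<le> g z - g x) (at_right 0)"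
  proof -
    have ev0: "eventually (\<lambda>t. t \<in> {0<..<1}) (at_right (0::real))"
      by (rule eventually_at_right_real) simp
    show ?thesis using ev0
  proof eventually_elim
    case (elim t)
    hence t: "0 < t" "t < 1" by auto
    have "x + t *\<^sub>R v = (1 - t) *\<^sub>R x + t *\<^sub>R z" by (simp add: v_def algebra_simps)
    also have "g \<dots> \<le> (1 - t) * g x + t * g z"
      using convex_onD[OF cg, of t x z] t x z by simp
    finally have "g (x + t *\<^sub>R v) - g x \<le> t * (g z - g x)" by (simp add: algebra_simps)
    thus ?case using t by (simp add: divide_simps mult.commute)
  qed
  qed
  have "D \<bullet> v \<le> g z - g x"
    by (rule tendsto_le[OF trivial_limit_at_right_real tendsto_const lim ev])
  thus ?thesis by (simp add: v_def)
qed



lemma xt_bound: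
  fixes g G :: "'a::euclidean_space \<Rightarrow> real"
  assumes cX: "convex X" and XU: "X \<subseteq> U" and oU: "open U" and cG: "convex_on U G"
    and w: "w \<in> X" and tau: "tau > 0"
    and sc: "strongly_convex_on X tau g"
    and d: "(g has_derivative (\<lambda>h. gw \<bullet> h)) (at w)"
    and am: "is_arg_min (\<lambda>z. g z + (c - gw) \<bullet> (z - w) + G z) (\<lambda>z. z \<in> X) xt"
    and A2: "\<And>\<xi>. \<xi> \<in> subdiff U G w \<Longrightarrow> norm \<xi> \<le> LG"
  shows "norm (w - xt) \<le> 4 / tau * (norm c + LG)"
proof -
  define h where "h = (\<lambda>z. g z + (c - gw) \<bullet> (z - w) + G z)"
  have xt: "xt \<in> X" and hmin: "\<And>z. z \<in> X \<Longrightarrow> h xt \<le> h z"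
    using am unfolding is_arg_min_def h_def by (auto simp: not_less)
  define \<Phi> where "\<Phi> = (\<lambda>z. g z - tau / 2 * (norm z)\<^sup>2)"
  have cPhi: "convex_on X \<Phi>" using sc unfolding strongly_convex_on_def \<Phi>_def .
  have cnorm: "convex_on X (\<lambda>z. tau / 2 * (norm z)\<^sup>2)"
    unfolding convex_on_def
  proof (intro conjI cX ballI allI impI)
    fix x y :: 'a and u v :: real assume uv: "u \<ge> 0" "v \<ge> 0" "u + v = 1"
    have "(norm (u *\<^sub>R x + v *\<^sub>R y))\<^sup>2 \<le> u * (norm x)\<^sup>2 + v * (norm y)\<^sup>2"
      using norm_sq_comb[OF uv(3), of x y] uv by (simp add: mult_nonneg_nonneg)
    hence "tau / 2 * (norm (u *\<^sub>R x + v *\<^sub>R y))\<^sup>2 \<le> tau / 2 * (u * (norm x)\<^sup>2 + v * (norm y)\<^sup>2)"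
      using tau by (intro mult_left_mono) auto
    also have "\<dots> = u * (tau / 2 * (norm x)\<^sup>2) + v * (tau / 2 * (norm y)\<^sup>2)" by (simp add: algebra_simps)
    finally show "tau / 2 * (norm (u *\<^sub>R x + v *\<^sub>R y))\<^sup>2 \<le> u * (tau / 2 * (norm x)\<^sup>2) + v * (tau / 2 * (norm y)\<^sup>2)" .
  qed
  have cg: "convex_on X g"
    using convex_on_add[OF cPhi cnorm] by (simp add: \<Phi>_def)
  define m where "m = (1/2) *\<^sub>R w + (1/2) *\<^sub>R xt"
  have mX: "m \<in> X" unfolding m_def using cX w xt by (simp add: convexD)
  have wU: "w \<in> U" and xtU: "xt \<in> U" using XU w xt by auto
  have P1: "\<Phi> m \<le> (1/2) * \<Phi> w + (1/2) * \<Phi> xt"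
    using convex_onD[OF cPhi, of "1/2" w xt] w xt by (simp add: m_def)
  have G1: "G m \<le> (1/2) * G w + (1/2) * G xt"
    using convex_onD[OF cG, of "1/2" w xt] wU xtU by (simp add: m_def)
  have N1: "(norm m)\<^sup>2 = (1/2) * (norm w)\<^sup>2 + (1/2) * (norm xt)\<^sup>2 - (1/4) * (norm (w - xt))\<^sup>2"
    unfolding m_def using norm_sq_comb[of "1/2" "1/2" w xt] by simp
  have L1: "(c - gw) \<bullet> (m - w) = (1/2) * ((c - gw) \<bullet> (w - w)) + (1/2) * ((c - gw) \<bullet> (xt - w))"
    unfolding m_def by (simp add: inner_diff_right inner_add_right algebra_simps)
  have N2: "tau / 2 * (norm m)\<^sup>2 = (1/2) * (tau / 2 * (norm w)\<^sup>2) + (1/2) * (tau / 2 * (norm xt)\<^sup>2) - tau / 8 * (norm (w - xt))\<^sup>2"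
    unfolding N1 by (simp add: algebra_simps)
  have hm': "h m = \<Phi> m + tau / 2 * (norm m)\<^sup>2 + (c - gw) \<bullet> (m - w) + G m" by (simp add: h_def \<Phi>_def)
  have hw': "h w = \<Phi> w + tau / 2 * (norm w)\<^sup>2 + (c - gw) \<bullet> (w - w) + G w" by (simp add: h_def \<Phi>_def)
  have hxt': "h xt = \<Phi> xt + tau / 2 * (norm xt)\<^sup>2 + (c - gw) \<bullet> (xt - w) + G xt" by (simp add: h_def \<Phi>_def)
  have "h m \<le> (1/2) * h w + (1/2) * h xt - tau / 8 * (norm (w - xt))\<^sup>2"
    using P1 G1 N2 L1 hm' hw' hxt' by linarith
  then have hm: "h m \<le> (1/2) * h w + (1/2) * h xt - tau / 8 * (norm (w - xt))\<^sup>2" .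
  have step1: "tau / 4 * (norm (w - xt))\<^sup>2 \<le> h w - h xt"
    using hm hmin[OF mX] by simp
  have gi: "g xt \<ge> g w + gw \<bullet> (xt - w)" by (rule grad_ineq[OF cg w xt d])
  obtain \<xi> where xi: "\<forall>z\<in>U. G z \<ge> G w + \<xi> \<bullet> (z - w)"
    using subgrad_exists[OF cG oU wU] by blast
  have xin: "norm \<xi> \<le> LG" using A2 xi by (simp add: subdiff_def)
  have Gi: "G w - G xt \<le> \<xi> \<bullet> (w - xt)"
  proof -
    have "G xt \<ge> G w + \<xi> \<bullet> (xt - w)" using xi xtU by blast
    thus ?thesis by (simp add: inner_diff_right)
  qed
  have "h w - h xt = g w - g xt - (c - gw) \<bullet> (xt - w) + (G w - G xt)"
    by (simp add: h_def)
  also have "\<dots> \<le> c \<bullet> (w - xt) + \<xi> \<bullet> (w - xt)"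
    using gi Gi by (simp add: inner_diff_right inner_diff_left algebra_simps)
  also have "\<dots> \<le> norm c * norm (w - xt) + LG * norm (w - xt)"
  proof -
    have "c \<bullet> (w - xt) \<le> norm c * norm (w - xt)" by (rule norm_cauchy_schwarz)
    moreover have "\<xi> \<bullet> (w - xt) \<le> norm \<xi> * norm (w - xt)" by (rule norm_cauchy_schwarz)
    moreover have "norm \<xi> * norm (w - xt) \<le> LG * norm (w - xt)"
      using xin by (simp add: mult_right_mono)
    ultimately show ?thesis by linarith
  qed
  finally have ineq: "tau / 4 * (norm (w - xt))\<^sup>2 \<le> (norm c + LG) * norm (w - xt)"
    using step1 by (simp add: algebra_simps)
  have LG0: "LG \<ge> 0" using xin norm_ge_zero order_trans by blast
  show ?thesis
  proof (cases "norm (w - xt) = 0")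
    case True thus ?thesis using LG0 tau by simp
  next
    case False
    hence pos: "norm (w - xt) > 0" by simp
    from ineq have "tau / 4 * norm (w - xt) * norm (w - xt) \<le> (norm c + LG) * norm (w - xt)"
      by (simp add: power2_eq_square mult.assoc)
    hence "tau / 4 * norm (w - xt) \<le> norm c + LG" using pos by simp
    thus ?thesis using tau by (simp add: field_simps)
  qed
qed



fun reach :: "(nat \<Rightarrow> (nat \<times> nat) set) \<Rightarrow> nat \<Rightarrow> nat \<Rightarrow> nat \<Rightarrow> nat \<Rightarrow> nat set" where
  "reach E n k j0 0 = {j0}"
| "reach E n k j0 (Suc d) = reach E n k j0 d \<union> {i \<in> {1..n}. \<exists>j\<in>reach E n k j0 d. (j, i) \<in> E (k + d)}"

lemma reach_sub: "j0 \<in> {1..n} \<Longrightarrow> reach E n k j0 d \<subseteq> {1..n}"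
  by (induction d) auto

lemma reach_mono: "d \<le> d' \<Longrightarrow> reach E n k j0 d \<subseteq> reach E n k j0 d'"
proof (induction d' rule: dec_induct)
  case base thus ?case by simp
next
  case (step m) thus ?case by auto
qed

lemma crossing:
  assumes sc: "strongly_connected_digraph V R" and A: "A \<subseteq> V" "j0 \<in> A" and i: "i \<in> V" "i \<notin> A"
  shows "\<exists>a b. (a, b) \<in> R \<and> a \<in> A \<and> b \<in> V \<and> b \<notin> A"
proof -
  have "(j0, i) \<in> (R \<inter> V \<times> V)\<^sup>*" using sc A i unfolding strongly_connected_digraph_def by blast
  then show ?thesis using i(2)
  proof (induction rule: rtrancl_induct)
    case base thus ?case using A by simp
  next
    case (step y z)
    show ?case
    proof (cases "y \<in> A")
      case True thus ?thesis using step by blast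
    next
      case False thus ?thesis using step by blast
    qed
  qed
qed

lemma reach_card:
  assumes bc: "B_strongly_connected n B E" and B1: "B \<ge> 1" and j0: "j0 \<in> {1..n}"
  shows "card (reach E n k j0 (m * B)) \<ge> min n (m + 1)"
proof (induction m)
  case 0 thus ?case by simp
next
  case (Suc m)
  let ?R = "reach E n k j0"
  have fin: "\<And>d. finite (?R d)" by (rule finite_subset[OF reach_sub[OF j0]]) simp
  have sub: "\<And>d. ?R d \<subseteq> {1..n}" using reach_sub[OF j0] by blast
  have mono: "?R (m * B) \<subseteq> ?R (Suc m * B)" by (rule reach_mono) simp
  show ?case
  proof (cases "?R (m * B) = {1..n}")
    case True
    hence "?R (Suc m * B) = {1..n}" using mono sub by blast
    thus ?thesis by simp
  next
    case False
    then obtain i where i: "i \<in> {1..n}" "i \<notin> ?R (m * B)" using sub by blast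
    have j0R: "j0 \<in> ?R (m * B)" using reach_mono[of 0 "m * B" E n k j0] by auto
    have "strongly_connected_digraph {1..n} (\<Union>t\<in>{k + m * B..k + m * B + B - 1}. E t)"
      using bc unfolding B_strongly_connected_def by blast
    from crossing[OF this sub j0R i]
    obtain a b t where ab: "(a, b) \<in> E t" "t \<in> {k + m * B..k + m * B + B - 1}" "a \<in> ?R (m * B)"
      "b \<in> {1..n}" "b \<notin> ?R (m * B)" by blast
    define r where "r = t - (k + m * B)"
    have r: "r < B" "t = k + (m * B + r)" using ab(2) B1 by (auto simp: r_def)
    have "?R (m * B) \<subseteq> ?R (m * B + r)" by (rule reach_mono) simp
    hence "a \<in> ?R (m * B + r)" using ab(3) by blast
    hence "b \<in> ?R (Suc (m * B + r))" using ab r by auto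
    moreover have "?R (Suc (m * B + r)) \<subseteq> ?R (Suc m * B)" by (rule reach_mono) (use r in simp)
    ultimately have "b \<in> ?R (Suc m * B)" by blast
    hence "?R (m * B) \<subset> ?R (Suc m * B)" using mono ab(5) by blast
    hence "card (?R (m * B)) < card (?R (Suc m * B))" using fin psubset_card_mono by blast
    thus ?thesis using Suc.IH by simp
  qed
qed

lemma reach_full:
  assumes bc: "B_strongly_connected n B E" and B1: "B \<ge> 1" and j0: "j0 \<in> {1..n}" and n1: "n \<ge> 1"
  shows "reach E n k j0 ((n - 1) * B) = {1..n}"
proof -
  have "card (reach E n k j0 ((n - 1) * B)) \<ge> n"
    using reach_card[OF bc B1 j0, where k=k and m="n - 1"] n1 by simp
  moreover have "reach E n k j0 ((n - 1) * B) \<subseteq> {1..n}" by (rule reach_sub[OF j0])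
  ultimately show ?thesis using card_seteq[OF finite_atLeastAtMost] by (metis card_atLeastAtMost diff_Suc_1)
qed

lemma reach_lower:
  fixes W :: "nat \<Rightarrow> nat \<Rightarrow> nat \<Rightarrow> real" and s :: "nat \<Rightarrow> nat \<Rightarrow> real"
  assumes Wnn: "\<And>t i j. i \<in> {1..n} \<Longrightarrow> j \<in> {1..n} \<Longrightarrow> W t i j \<ge> 0"
    and Wedge: "\<And>t i j. i \<in> {1..n} \<Longrightarrow> j \<in> {1..n} \<Longrightarrow> (j, i) \<in> E t \<Longrightarrow> W t i j \<ge> w"
    and Wdiag: "\<And>t i. i \<in> {1..n} \<Longrightarrow> W t i i \<ge> w"
    and w0: "w \<ge> 0"
    and snn: "\<And>d j. j \<in> {1..n} \<Longrightarrow> s d j \<ge> 0"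
    and srec: "\<And>d i. i \<in> {1..n} \<Longrightarrow> s (Suc d) i \<ge> (\<Sum>j\<in>{1..n}. W (k + d) i j * s d j)"
    and j0: "j0 \<in> {1..n}"
  shows "i \<in> reach E n k j0 d \<Longrightarrow> s d i \<ge> w ^ d * s 0 j0"
proof (induction d arbitrary: i)
  case 0 thus ?case by simp
next
  case (Suc d)
  have single: "s (Suc d) i \<ge> W (k + d) i j * s d j" if "i \<in> {1..n}" "j \<in> {1..n}" for j
  proof -
    have "W (k + d) i j * s d j \<le> (\<Sum>j\<in>{1..n}. W (k + d) i j * s d j)"
      by (rule member_le_sum) (use that Wnn snn in auto)
    thus ?thesis using srec[OF that(1), of d] by linarith
  qed
  have s0: "s 0 j0 \<ge> 0" using snn j0 by blast
  from Suc.prems consider (old) "i \<in> reach E n k j0 d"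
    | (new) j where "i \<in> {1..n}" "j \<in> reach E n k j0 d" "(j, i) \<in> E (k + d)" by auto
  then show ?case
  proof cases
    case old
    have iV: "i \<in> {1..n}" using old reach_sub[OF j0] by blast
    have "w ^ Suc d * s 0 j0 = w * (w ^ d * s 0 j0)" by simp
    also have "\<dots> \<le> W (k + d) i i * s d i"
      using Suc.IH[OF old] Wdiag[OF iV] Wnn[OF iV iV] w0 s0 snn[OF iV] by (intro mult_mono) auto
    also have "\<dots> \<le> s (Suc d) i" using single[OF iV iV] .
    finally show ?thesis .
  next
    case new
    have jV: "j \<in> {1..n}" using new reach_sub[OF j0] by blast
    have "w ^ Suc d * s 0 j0 = w * (w ^ d * s 0 j0)" by simp
    also have "\<dots> \<le> W (k + d) i j * s d j"
      using Suc.IH[OF new(2)] Wedge[OF new(1) jV new(3)] Wnn[OF new(1) jV] w0 s0 snn[OF jV] by (intro mult_mono) auto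
    also have "\<dots> \<le> s (Suc d) i" using single[OF new(1) jV] .
    finally show ?thesis .
  qed
qed

lemma ex_argmax:
  fixes f :: "nat \<Rightarrow> real"
  assumes "finite V" "V \<noteq> {}"
  shows "\<exists>j\<in>V. \<forall>l\<in>V. f l \<le> f j"
proof -
  have "Max (f ` V) \<in> f ` V" using assms by (intro Max_in) auto
  then obtain j where j: "j \<in> V" "f j = Max (f ` V)" by (metis imageE)
  have "\<forall>l\<in>V. f l \<le> f j" using Max_ge[of "f ` V"] assms(1) j(2) by auto
  thus ?thesis using j(1) by blast
qed

lemma ex_argmin:
  fixes f :: "nat \<Rightarrow> real"
  assumes "finite V" "V \<noteq> {}"
  shows "\<exists>j\<in>V. \<forall>l\<in>V. f j \<le> f l"
  using ex_argmax[OF assms, of "\<lambda>j. - f j"] by auto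



lemma consensus_scalar:
  fixes W :: "nat \<Rightarrow> nat \<Rightarrow> nat \<Rightarrow> real" and s :: "nat \<Rightarrow> nat \<Rightarrow> real" and \<epsilon> :: "nat \<Rightarrow> real"
  assumes Wnn: "\<And>t i j. i \<in> {1..n} \<Longrightarrow> j \<in> {1..n} \<Longrightarrow> W t i j \<ge> 0"
    and Wedge: "\<And>t i j. i \<in> {1..n} \<Longrightarrow> j \<in> {1..n} \<Longrightarrow> (j, i) \<in> E t \<Longrightarrow> W t i j \<ge> w"
    and Wdiag: "\<And>t i. i \<in> {1..n} \<Longrightarrow> W t i i \<ge> w"
    and Wrow: "\<And>t i. i \<in> {1..n} \<Longrightarrow> (\<Sum>j\<in>{1..n}. W t i j) = 1"
    and w0: "w \<ge> 0"
    and rec: "\<And>t i. i \<in> {1..n} \<Longrightarrow> \<bar>s (Suc t) i - (\<Sum>j\<in>{1..n}. W t i j * s t j)\<bar> \<le> \<epsilon> t"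
    and j0: "j0 \<in> {1..n}" and j1: "j1 \<in> {1..n}"
    and mm: "\<And>j. j \<in> {1..n} \<Longrightarrow> s k j0 \<le> s k j \<and> s k j \<le> s k j1"
    and full: "\<And>j. j \<in> {1..n} \<Longrightarrow> reach E n k j T = {1..n}"
    and i: "i \<in> {1..n}" and l: "l \<in> {1..n}"
  shows "s (k + T) l - s (k + T) i \<le> (1 - 2 * w ^ T) * (s k j1 - s k j0) + 2 * (\<Sum>t<T. \<epsilon> (k + t))"
proof -
  define Es where "Es d = (\<Sum>t<d. \<epsilon> (k + t))" for d
  have eps0: "\<epsilon> t \<ge> 0" for t using rec[OF j0, of t] by linarith
  have wsum: "(\<Sum>j\<in>{1..n}. W t i j * c) = c" if "i \<in> {1..n}" for t i c
    using Wrow[OF that, of t] by (simp add: sum_distrib_right[symmetric])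
  have aux: "s k j0 - Es d \<le> s (k + d) j \<and> s (k + d) j \<le> s k j1 + Es d" if "j \<in> {1..n}" for d j
    using that
  proof (induction d arbitrary: j)
    case 0 thus ?case using mm by (simp add: Es_def)
  next
    case (Suc d)
    have lo: "(\<Sum>j\<in>{1..n}. W (k + d) j' j * (s k j0 - Es d)) \<le> (\<Sum>j\<in>{1..n}. W (k + d) j' j * s (k + d) j)"
      if "j' \<in> {1..n}" for j'
      by (rule sum_mono, rule mult_left_mono) (use Suc.IH that Wnn in auto)
    have hi: "(\<Sum>j\<in>{1..n}. W (k + d) j' j * s (k + d) j) \<le> (\<Sum>j\<in>{1..n}. W (k + d) j' j * (s k j1 + Es d))"
      if "j' \<in> {1..n}" for j'
      by (rule sum_mono, rule mult_left_mono) (use Suc.IH that Wnn in auto)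
    have r: "\<bar>s (k + Suc d) j - (\<Sum>ja\<in>{1..n}. W (k + d) j ja * s (k + d) ja)\<bar> \<le> \<epsilon> (k + d)"
      using rec[OF Suc.prems, of "k + d"] by simp
    have E: "Es (Suc d) = Es d + \<epsilon> (k + d)" by (simp add: Es_def)
    show ?case using lo[OF Suc.prems] hi[OF Suc.prems] wsum[OF Suc.prems] r E by (simp add: abs_le_iff)
  qed
  define s1 where "s1 d j = s (k + d) j - s k j0 + Es d" for d j
  have s1: "s1 T i \<ge> w ^ T * s1 0 j1"
  proof (rule reach_lower[where W = W and E = E and k = k and n = n])
    show "\<And>t i j. i \<in> {1..n} \<Longrightarrow> j \<in> {1..n} \<Longrightarrow> W t i j \<ge> 0" by (rule Wnn)
    show "\<And>t i j. i \<in> {1..n} \<Longrightarrow> j \<in> {1..n} \<Longrightarrow> (j, i) \<in> E t \<Longrightarrow> W t i j \<ge> w" by (rule Wedge)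
    show "\<And>t i. i \<in> {1..n} \<Longrightarrow> W t i i \<ge> w" by (rule Wdiag)
    show "w \<ge> 0" by (rule w0)
    show "\<And>d j. j \<in> {1..n} \<Longrightarrow> s1 d j \<ge> 0"
    proof -
      fix d j assume j: "j \<in> {1..n}"
      show "s1 d j \<ge> 0" using aux[OF j, of d] by (simp add: s1_def)
    qed
    show "j1 \<in> {1..n}" by (rule j1)
    show "i \<in> reach E n k j1 T" using full[OF j1] i by simp
    fix d i' assume i': "i' \<in> {1..n}"
    have "(\<Sum>j\<in>{1..n}. W (k + d) i' j * s1 d j)
        = (\<Sum>j\<in>{1..n}. W (k + d) i' j * s (k + d) j) + (\<Sum>j\<in>{1..n}. W (k + d) i' j * (Es d - s k j0))"
      by (simp add: s1_def sum.distrib[symmetric] algebra_simps)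
    also have "\<dots> = (\<Sum>j\<in>{1..n}. W (k + d) i' j * s (k + d) j) + (Es d - s k j0)"
      using wsum[OF i'] by simp
    also have "\<dots> \<le> s1 (Suc d) i'"
      using rec[OF i', of "k + d"] by (simp add: s1_def Es_def abs_le_iff)
    finally show "(\<Sum>j\<in>{1..n}. W (k + d) i' j * s1 d j) \<le> s1 (Suc d) i'" .
  qed
  define s2 where "s2 d j = s k j1 + Es d - s (k + d) j" for d j
  have s2: "s2 T l \<ge> w ^ T * s2 0 j0"
  proof (rule reach_lower[where W = W and E = E and k = k and n = n])
    show "\<And>t i j. i \<in> {1..n} \<Longrightarrow> j \<in> {1..n} \<Longrightarrow> W t i j \<ge> 0" by (rule Wnn)
    show "\<And>t i j. i \<in> {1..n} \<Longrightarrow> j \<in> {1..n} \<Longrightarrow> (j, i) \<in> E t \<Longrightarrow> W t i j \<ge> w" by (rule Wedge)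
    show "\<And>t i. i \<in> {1..n} \<Longrightarrow> W t i i \<ge> w" by (rule Wdiag)
    show "w \<ge> 0" by (rule w0)
    show "\<And>d j. j \<in> {1..n} \<Longrightarrow> s2 d j \<ge> 0"
    proof -
      fix d j assume j: "j \<in> {1..n}"
      show "s2 d j \<ge> 0" using aux[OF j, of d] by (simp add: s2_def)
    qed
    show "j0 \<in> {1..n}" by (rule j0)
    show "l \<in> reach E n k j0 T" using full[OF j0] l by simp
    fix d i' assume i': "i' \<in> {1..n}"
    have "(\<Sum>j\<in>{1..n}. W (k + d) i' j * s2 d j)
        = (\<Sum>j\<in>{1..n}. W (k + d) i' j * (s k j1 + Es d)) - (\<Sum>j\<in>{1..n}. W (k + d) i' j * s (k + d) j)"
      by (simp add: s2_def sum_subtractf[symmetric] algebra_simps)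
    also have "\<dots> = (s k j1 + Es d) - (\<Sum>j\<in>{1..n}. W (k + d) i' j * s (k + d) j)"
      using wsum[OF i'] by simp
    also have "\<dots> \<le> s2 (Suc d) i'"
      using rec[OF i', of "k + d"] by (simp add: s2_def Es_def abs_le_iff)
    finally show "(\<Sum>j\<in>{1..n}. W (k + d) i' j * s2 d j) \<le> s2 (Suc d) i'" .
  qed
  from s1 s2 show ?thesis by (simp add: s1_def s2_def Es_def algebra_simps)
qed

lemma consensus_vec:
  fixes W :: "nat \<Rightarrow> nat \<Rightarrow> nat \<Rightarrow> real" and z :: "nat \<Rightarrow> nat \<Rightarrow> 'a::euclidean_space" and \<epsilon> :: "nat \<Rightarrow> real"
  assumes Wnn: "\<And>t i j. i \<in> {1..n} \<Longrightarrow> j \<in> {1..n} \<Longrightarrow> W t i j \<ge> 0"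
    and Wedge: "\<And>t i j. i \<in> {1..n} \<Longrightarrow> j \<in> {1..n} \<Longrightarrow> (j, i) \<in> E t \<Longrightarrow> W t i j \<ge> w"
    and Wdiag: "\<And>t i. i \<in> {1..n} \<Longrightarrow> W t i i \<ge> w"
    and Wrow: "\<And>t i. i \<in> {1..n} \<Longrightarrow> (\<Sum>j\<in>{1..n}. W t i j) = 1"
    and w0: "w \<ge> 0" and w2: "2 * w ^ T \<le> 1"
    and rec: "\<And>t i. i \<in> {1..n} \<Longrightarrow> norm (z (Suc t) i - (\<Sum>j\<in>{1..n}. W t i j *\<^sub>R z t j)) \<le> \<epsilon> t"
    and D: "\<And>j l. j \<in> {1..n} \<Longrightarrow> l \<in> {1..n} \<Longrightarrow> norm (z k j - z k l) \<le> D"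
    and full: "\<And>j. j \<in> {1..n} \<Longrightarrow> reach E n k j T = {1..n}"
    and i: "i \<in> {1..n}" and l: "l \<in> {1..n}"
  shows "norm (z (k + T) i - z (k + T) l) \<le> (1 - 2 * w ^ T) * D + 2 * (\<Sum>t<T. \<epsilon> (k + t))"
proof -
  define u where "u = z (k + T) i - z (k + T) l"
  have eps0: "\<epsilon> t \<ge> 0" for t using rec[OF i, of t] norm_ge_zero order_trans by blast
  have D0: "D \<ge> 0" using D[OF i i] by simp
  show ?thesis
  proof (cases "u = 0")
    case True
    have "0 \<le> (1 - 2 * w ^ T) * D" using w2 D0 by simp
    moreover have "0 \<le> (\<Sum>t<T. \<epsilon> (k + t))" using eps0 by (simp add: sum_nonneg)
    ultimately show ?thesis using True by (simp add: u_def)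
  next
    case False
    define e where "e = (1 / norm u) *\<^sub>R u"
    have ne: "norm e = 1" using False by (simp add: e_def)
    define s where "s t j = e \<bullet> z t j" for t j
    have srec: "\<bar>s (Suc t) i' - (\<Sum>j\<in>{1..n}. W t i' j * s t j)\<bar> \<le> \<epsilon> t" if "i' \<in> {1..n}" for t i'
    proof -
      have "s (Suc t) i' - (\<Sum>j\<in>{1..n}. W t i' j * s t j) = e \<bullet> (z (Suc t) i' - (\<Sum>j\<in>{1..n}. W t i' j *\<^sub>R z t j))"
        by (simp add: s_def inner_diff_right inner_sum_right)
      also have "\<bar>\<dots>\<bar> \<le> norm e * norm (z (Suc t) i' - (\<Sum>j\<in>{1..n}. W t i' j *\<^sub>R z t j))"
        by (rule Cauchy_Schwarz_ineq2)
      finally have "\<bar>s (Suc t) i' - (\<Sum>j\<in>{1..n}. W t i' j * s t j)\<bar> \<le> norm (z (Suc t) i' - (\<Sum>j\<in>{1..n}. W t i' j *\<^sub>R z t j))"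
        using ne by simp
      thus ?thesis using rec[OF that, of t] by linarith
    qed
    obtain j0 where j0: "j0 \<in> {1..n}" "\<forall>l\<in>{1..n}. s k j0 \<le> s k l"
      using ex_argmin[of "{1..n}" "s k"] i by auto
    obtain j1 where j1: "j1 \<in> {1..n}" "\<forall>l\<in>{1..n}. s k l \<le> s k j1"
      using ex_argmax[of "{1..n}" "s k"] i by auto
    have cs: "s (k + T) i - s (k + T) l \<le> (1 - 2 * w ^ T) * (s k j1 - s k j0) + 2 * (\<Sum>t<T. \<epsilon> (k + t))"
      by (rule consensus_scalar[where W = W and E = E and n = n and w = w, OF Wnn Wedge Wdiag Wrow w0 srec j0(1) j1(1) _ full l i])
         (use j0 j1 in auto)
    have "s (k + T) i - s (k + T) l = e \<bullet> u" by (simp add: s_def u_def inner_diff_right)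
    also have "e \<bullet> u = norm u" using False by (simp add: e_def power2_norm_eq_inner[symmetric] power2_eq_square)
    finally have lhs: "s (k + T) i - s (k + T) l = norm u" .
    have "s k j1 - s k j0 = e \<bullet> (z k j1 - z k j0)" by (simp add: s_def inner_diff_right)
    also have "\<dots> \<le> norm e * norm (z k j1 - z k j0)" by (rule norm_cauchy_schwarz)
    also have "\<dots> \<le> D" using ne D[OF j1(1) j0(1)] by simp
    finally have "(1 - 2 * w ^ T) * (s k j1 - s k j0) \<le> (1 - 2 * w ^ T) * D"
      using w2 by (intro mult_left_mono) auto
    thus ?thesis using cs lhs by (simp add: u_def)
  qed
qed



lemma wavg_norm:
  fixes v :: "nat \<Rightarrow> 'a::real_normed_vector"
  assumes "finite V" "\<And>j. j \<in> V \<Longrightarrow> W j \<ge> 0" "(\<Sum>j\<in>V. W j) = 1" "\<And>j. j \<in> V \<Longrightarrow> norm (v j) \<le> c"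
  shows "norm (\<Sum>j\<in>V. W j *\<^sub>R v j) \<le> c"
proof -
  have "norm (\<Sum>j\<in>V. W j *\<^sub>R v j) \<le> (\<Sum>j\<in>V. norm (W j *\<^sub>R v j))" by (rule norm_sum)
  also have "\<dots> \<le> (\<Sum>j\<in>V. W j * c)"
    by (rule sum_mono) (use assms in \<open>simp add: mult_left_mono\<close>)
  also have "\<dots> = c" using assms(3) by (simp add: sum_distrib_right[symmetric])
  finally show ?thesis .
qed

lemma avg_dev:
  fixes v :: "nat \<Rightarrow> 'a::real_normed_vector"
  assumes "finite V" "\<And>j. j \<in> V \<Longrightarrow> c j \<ge> 0" "(\<Sum>j\<in>V. c j) = n" "n > 0"
    "\<And>j. j \<in> V \<Longrightarrow> norm (u - v j) \<le> B"
  shows "norm (u - (1 / n) *\<^sub>R (\<Sum>j\<in>V. c j *\<^sub>R v j)) \<le> B"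
proof -
  have "u - (1 / n) *\<^sub>R (\<Sum>j\<in>V. c j *\<^sub>R v j) = (\<Sum>j\<in>V. (c j / n) *\<^sub>R (u - v j))"
  proof -
    have "(\<Sum>j\<in>V. (c j / n) *\<^sub>R (u - v j)) = (\<Sum>j\<in>V. (c j / n) *\<^sub>R u) - (\<Sum>j\<in>V. (c j / n) *\<^sub>R v j)"
      by (simp add: scaleR_diff_right sum_subtractf)
    also have "(\<Sum>j\<in>V. (c j / n) *\<^sub>R u) = u"
      using assms(3,4) by (simp add: scaleR_sum_left[symmetric] sum_divide_distrib[symmetric])
    also have "(\<Sum>j\<in>V. (c j / n) *\<^sub>R v j) = (1 / n) *\<^sub>R (\<Sum>j\<in>V. c j *\<^sub>R v j)"
      by (simp add: scaleR_sum_right)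
    finally show ?thesis by simp
  qed
  also have "norm \<dots> \<le> B"
    by (rule wavg_norm) (use assms in \<open>auto simp: sum_divide_distrib[symmetric]\<close>)
  finally show ?thesis .
qed



theorem mainTheorem17:
  fixes I B :: nat
    and X U :: "'a::euclidean_space set"
    and f :: "nat \<Rightarrow> 'a \<Rightarrow> real" and gradf :: "nat \<Rightarrow> 'a \<Rightarrow> 'a"
    and G :: "'a \<Rightarrow> real"
    and L Lt tau :: "nat \<Rightarrow> real" and L_F L_G :: real
    and ft :: "nat \<Rightarrow> 'a \<Rightarrow> 'a \<Rightarrow> real" and gradft :: "nat \<Rightarrow> 'a \<Rightarrow> 'a \<Rightarrow> 'a"
    and E :: "nat \<Rightarrow> (nat \<times> nat) set"
    and a :: "nat \<Rightarrow> nat \<Rightarrow> nat \<Rightarrow> real"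
    and \<kappa> :: real
    and \<gamma> :: "nat \<Rightarrow> real"
    and x xt y :: "nat \<Rightarrow> nat \<Rightarrow> 'a"
    and \<phi> :: "nat \<Rightarrow> nat \<Rightarrow> real"
  assumes I_ge2: "I \<ge> 2"
    (* problem data *)
    and X_ne: "X \<noteq> {}" and X_closed: "closed X" and X_convex: "convex X"
    and U_open: "open U" and XU: "X \<subseteq> U"
    and f_deriv: "\<And>i z. i \<in> {1..I} \<Longrightarrow> z \<in> U \<Longrightarrow>
                    (f i has_derivative (\<lambda>h. gradf i z \<bullet> h)) (at z)"
    and f_C1: "\<And>i. i \<in> {1..I} \<Longrightarrow> continuous_on U (gradf i)"
    and f_lip: "\<And>i. i \<in> {1..I} \<Longrightarrow> (L i)-lipschitz_on X (gradf i)"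
    and G_convex: "convex_on U G"
    and V_bdd: "bdd_below ((\<lambda>z. (\<Sum>i\<in>{1..I}. f i z) + G z) ` X)"
    (* network *)
    and E_sub: "\<And>k. E k \<subseteq> {1..I} \<times> {1..I}"
    and B_pos: "B \<ge> 1"
    and B_conn: "B_strongly_connected I B E"
    and kappa_pos: "\<kappa> > 0"
    and a_nonneg: "\<And>k i j. i \<in> {1..I} \<Longrightarrow> j \<in> {1..I} \<Longrightarrow> a k i j \<ge> 0"
    and a_zero: "\<And>k i j. i \<in> {1..I} \<Longrightarrow> j \<in> {1..I} \<Longrightarrow> j \<noteq> i \<Longrightarrow> (j, i) \<notin> E k \<Longrightarrow> a k i j = 0"
    and a_edge: "\<And>k i j. i \<in> {1..I} \<Longrightarrow> j \<in> {1..I} \<Longrightarrow> (j, i) \<in> E k \<Longrightarrow> a k i j \<ge> \<kappa>"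
    and a_diag: "\<And>k i. i \<in> {1..I} \<Longrightarrow> a k i i \<ge> \<kappa>"
    and a_colstoch: "\<And>k j. j \<in> {1..I} \<Longrightarrow> (\<Sum>i\<in>{1..I}. a k i j) = 1"
    (* Assumption III.14 on the surrogates *)
    and tau_pos: "\<And>i. i \<in> {1..I} \<Longrightarrow> tau i > 0"
    and ft_sc: "\<And>i w. i \<in> {1..I} \<Longrightarrow> w \<in> X \<Longrightarrow> strongly_convex_on X (tau i) (\<lambda>z. ft i z w)"
    and ft_deriv: "\<And>i w z. i \<in> {1..I} \<Longrightarrow> w \<in> X \<Longrightarrow> z \<in> U \<Longrightarrow>
                    ((\<lambda>z. ft i z w) has_derivative (\<lambda>h. gradft i z w \<bullet> h)) (at z)"
    and ft_C1: "\<And>i w. i \<in> {1..I} \<Longrightarrow> w \<in> X \<Longrightarrow> continuous_on U (\<lambda>z. gradft i z w)"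
    and ft_grad_cons: "\<And>i z. i \<in> {1..I} \<Longrightarrow> z \<in> X \<Longrightarrow> gradft i z z = gradf i z"
    and ft_lip: "\<And>i z. i \<in> {1..I} \<Longrightarrow> z \<in> X \<Longrightarrow> (Lt i)-lipschitz_on X (\<lambda>w. gradft i z w)"
    (* (A1), (A2), (A3) *)
    and A1: "\<And>z. z \<in> X \<Longrightarrow> norm (\<Sum>i\<in>{1..I}. gradf i z) \<le> L_F"
    and A2: "\<And>z \<xi>. z \<in> X \<Longrightarrow> \<xi> \<in> subdiff U G z \<Longrightarrow> norm \<xi> \<le> L_G"
    and A3_range: "\<And>k. \<gamma> k \<in> {0<..1}"
    and A3_div: "filterlim (\<lambda>n. \<Sum>k<n. \<gamma> k) at_top sequentially"
    and A3_sq: "summable (\<lambda>k. (\<gamma> k)\<^sup>2)"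
    (* SONATA *)
    and init_x: "\<And>i. i \<in> {1..I} \<Longrightarrow> x 0 i \<in> X"
    and init_phi: "\<And>i. i \<in> {1..I} \<Longrightarrow> \<phi> 0 i = 1"
    and init_y: "\<And>i. i \<in> {1..I} \<Longrightarrow> y 0 i = gradf i (x 0 i)"
    and xt_def: "\<And>k i. i \<in> {1..I} \<Longrightarrow>
        is_arg_min (\<lambda>z. ft i z (x k i) + (real I *\<^sub>R y k i - gradf i (x k i)) \<bullet> (z - x k i) + G z)
                   (\<lambda>z. z \<in> X) (xt k i)"
    and phi_upd: "\<And>k i. i \<in> {1..I} \<Longrightarrow> \<phi> (Suc k) i = (\<Sum>j\<in>{1..I}. a k i j * \<phi> k j)"
    and x_upd: "\<And>k i. i \<in> {1..I} \<Longrightarrow> x (Suc k) i =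
        (1 / \<phi> (Suc k) i) *\<^sub>R
          (\<Sum>j\<in>{1..I}. (a k i j * \<phi> k j) *\<^sub>R (x k j + \<gamma> k *\<^sub>R (xt k j - x k j)))"
    and y_upd: "\<And>k i. i \<in> {1..I} \<Longrightarrow> y (Suc k) i =
        (1 / \<phi> (Suc k) i) *\<^sub>R (\<Sum>j\<in>{1..I}. (a k i j * \<phi> k j) *\<^sub>R y k j)
        + (1 / \<phi> (Suc k) i) *\<^sub>R (gradf i (x (Suc k) i) - gradf i (x k i))"
  shows
    "(let S = {\<phi> k i | k i. i \<in> {1..I}}; \<phi>_lb = Inf S; \<phi>_ub = Sup S in
        bdd_below S \<and> bdd_above S \<and>
        (\<forall>k. \<forall>i\<in>{1..I}. \<phi>_lb \<le> \<phi> k i \<and> \<phi> k i \<le> \<phi>_ub) \<and>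
        \<phi>_lb \<ge> \<kappa> ^ (2 * (I - 1) * B) \<and> \<kappa> ^ (2 * (I - 1) * B) > 0 \<and>
        \<phi>_ub \<le> real I - \<kappa> ^ (2 * (I - 1) * B))
     \<and> (\<forall>i\<in>{1..I}. bdd_above (range (\<lambda>k.
          norm (y k i - (1 / real I) *\<^sub>R (\<Sum>j\<in>{1..I}. \<phi> k j *\<^sub>R y k j)))))
     \<and> (\<forall>i\<in>{1..I}. bdd_above (range (\<lambda>k. norm (x k i - xt k i))))"
proof -
  define V where "V = {1..I}"
  define T where "T = (I - 1) * B"
  have finV: "finite V" and oneV: "1 \<in> V" and nV: "card V = I" using I_ge2 by (auto simp: V_def)
  have T1: "T \<ge> 1" using I_ge2 B_pos by (simp add: T_def)
  have kap1: "\<kappa> \<le> 1"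
  proof -
    have "\<kappa> \<le> a 0 1 1" using a_diag[of 1 0] I_ge2 by simp
    also have "a 0 1 1 \<le> (\<Sum>i\<in>{1..I}. a 0 i 1)"
      by (rule member_le_sum) (use a_nonneg I_ge2 in auto)
    also have "\<dots> = 1" using a_colstoch[of 1 0] I_ge2 by simp
    finally show ?thesis .
  qed
  have phi_pos: "\<forall>i\<in>{1..I}. \<phi> k i > 0" for k
  proof (induction k)
    case 0 thus ?case using init_phi by simp
  next
    case (Suc k)
    show ?case
    proof
      fix i assume i: "i \<in> {1..I}"
      have "0 < a k i i * \<phi> k i" using a_diag[OF i, of k] kappa_pos Suc i by (intro mult_pos_pos) auto
      also have "a k i i * \<phi> k i \<le> (\<Sum>j\<in>{1..I}. a k i j * \<phi> k j)"
      proof (rule member_le_sum[where f = "\<lambda>j. a k i j * \<phi> k j"])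
        fix j assume "j \<in> {1..I} - {i}"
        hence j: "j \<in> {1..I}" by blast
        show "0 \<le> a k i j * \<phi> k j" using mult_nonneg_nonneg[OF a_nonneg[OF i j] less_imp_le[OF bspec[OF Suc j]]] .
      qed (use i in auto)
      finally show "\<phi> (Suc k) i > 0" using phi_upd[OF i] by simp
    qed
  qed
  have phi_sum: "(\<Sum>i\<in>{1..I}. \<phi> k i) = real I" for k
  proof (induction k)
    case 0 thus ?case using init_phi by simp
  next
    case (Suc k)
    have "(\<Sum>i\<in>{1..I}. \<phi> (Suc k) i) = (\<Sum>i\<in>{1..I}. \<Sum>j\<in>{1..I}. a k i j * \<phi> k j)"
      using phi_upd by simp
    also have "\<dots> = (\<Sum>j\<in>{1..I}. \<Sum>i\<in>{1..I}. a k i j * \<phi> k j)" by (rule sum.swap)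
    also have "\<dots> = (\<Sum>j\<in>{1..I}. \<phi> k j)"
      using a_colstoch by (simp add: sum_distrib_right[symmetric])
    finally show ?case using Suc by simp
  qed
  have full: "reach E I k j T = {1..I}" if "j \<in> {1..I}" for k j
    unfolding T_def by (rule reach_full[OF B_conn B_pos that]) (use I_ge2 in simp)
  have phi_kpow: "\<phi> k i \<ge> \<kappa> ^ k" if i: "i \<in> {1..I}" for k i
    using i
  proof (induction k arbitrary: i)
    case 0 thus ?case using init_phi by simp
  next
    case (Suc k)
    have "\<kappa> ^ Suc k = \<kappa> * \<kappa> ^ k" by simp
    also have "\<dots> \<le> a k i i * \<phi> k i"
      using Suc a_diag[OF Suc.prems] a_nonneg[OF Suc.prems Suc.prems] kappa_pos by (intro mult_mono) auto
    also have "a k i i * \<phi> k i \<le> (\<Sum>j\<in>{1..I}. a k i j * \<phi> k j)"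
    proof (rule member_le_sum[where f = "\<lambda>j. a k i j * \<phi> k j"])
      fix j assume "j \<in> {1..I} - {i}"
      hence j: "j \<in> {1..I}" by blast
      show "0 \<le> a k i j * \<phi> k j"
        using mult_nonneg_nonneg[OF a_nonneg[OF Suc.prems j] less_imp_le[OF bspec[OF phi_pos j]]] .
    qed (use Suc.prems in auto)
    finally show ?case using phi_upd[OF Suc.prems] by simp
  qed
  define p where "p = \<kappa> ^ T"
  have p_pos: "p > 0" and p1: "p \<le> 1" using kappa_pos kap1 by (auto simp: p_def power_le_one)
  have phi_lb: "\<phi> k i \<ge> p" if i: "i \<in> {1..I}" for k i
  proof (cases "k < T")
    case True
    have "p \<le> \<kappa> ^ k" unfolding p_def using True kappa_pos kap1 by (intro power_decreasing) auto
    thus ?thesis using phi_kpow[OF i, of k] by simp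
  next
    case False
    then obtain k' where k': "k = k' + T" by (metis add.commute le_iff_add not_less)
    obtain j0 where j0: "j0 \<in> {1..I}" "\<phi> k' j0 \<ge> 1"
    proof (rule ccontr)
      assume "\<not> thesis"
      hence "\<forall>j\<in>{1..I}. \<phi> k' j < 1" using that by force
      hence "(\<Sum>j\<in>{1..I}. \<phi> k' j) < (\<Sum>j\<in>{1..I}. 1)" using I_ge2 by (intro sum_strict_mono) auto
      thus False using phi_sum[of k'] by simp
    qed
    have "\<phi> (k' + T) i \<ge> \<kappa> ^ T * \<phi> (k' + 0) j0"
      by (rule reach_lower[where W = a and E = E and n = I and k = k' and s = "\<lambda>d j. \<phi> (k' + d) j"
            and d = T, OF a_nonneg a_edge a_diag])
         (use kappa_pos phi_pos j0 phi_upd full[OF j0(1), of k'] i in \<open>auto simp: less_imp_le\<close>)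
    moreover have "\<kappa> ^ T * 1 \<le> \<kappa> ^ T * \<phi> k' j0" using j0 kappa_pos by simp
    ultimately show ?thesis by (simp add: k' p_def)
  qed
  have phi_ub: "\<phi> k i \<le> real I - p" if i: "i \<in> {1..I}" for k i
  proof -
    have "(\<Sum>j\<in>{1..I}. \<phi> k j) = \<phi> k i + (\<Sum>j\<in>{1..I} - {i}. \<phi> k j)"
      using i by (simp add: sum.remove)
    moreover have "(\<Sum>j\<in>{1..I} - {i}. p) \<le> (\<Sum>j\<in>{1..I} - {i}. \<phi> k j)"
      by (rule sum_mono) (use phi_lb in auto)
    moreover have "(\<Sum>j\<in>{1..I} - {i}. p) = real (I - 1) * p" using i by simp
    moreover have "real (I - 1) * p \<ge> p" using I_ge2 p_pos by simp
    ultimately show ?thesis using phi_sum[of k] by linarith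
  qed
  have partA: "(let S = {\<phi> k i | k i. i \<in> {1..I}}; \<phi>_lb = Inf S; \<phi>_ub = Sup S in
        bdd_below S \<and> bdd_above S \<and>
        (\<forall>k. \<forall>i\<in>{1..I}. \<phi>_lb \<le> \<phi> k i \<and> \<phi> k i \<le> \<phi>_ub) \<and>
        \<phi>_lb \<ge> \<kappa> ^ (2 * (I - 1) * B) \<and> \<kappa> ^ (2 * (I - 1) * B) > 0 \<and>
        \<phi>_ub \<le> real I - \<kappa> ^ (2 * (I - 1) * B))"
  proof -
    define S where "S = {\<phi> k i | k i. i \<in> {1..I}}"
    have Sne: "S \<noteq> {}" using oneV by (auto simp: S_def V_def)
    have bb: "bdd_below S" unfolding S_def bdd_below_def using phi_lb by blast
    have ba: "bdd_above S" unfolding S_def bdd_above_def using phi_ub by blast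
    have pp: "\<kappa> ^ (2 * (I - 1) * B) \<le> p" unfolding p_def T_def using kappa_pos kap1
      by (intro power_decreasing) auto
    have inf: "Inf S \<ge> p" by (rule cInf_greatest[OF Sne]) (use phi_lb in \<open>auto simp: S_def\<close>)
    have sup: "Sup S \<le> real I - p" by (rule cSup_least[OF Sne]) (use phi_ub in \<open>auto simp: S_def\<close>)
    have mem: "\<And>k i. i \<in> {1..I} \<Longrightarrow> \<phi> k i \<in> S" by (auto simp: S_def)
    show ?thesis unfolding Let_def S_def[symmetric]
      using bb ba inf sup pp kappa_pos mem cInf_lower[OF _ bb] cSup_upper[OF _ ba] by auto
  qed
  define W where "W t i j = a t i j * \<phi> t j / \<phi> (Suc t) i" for t i j
  define w where "w = \<kappa> * p / real I"
  have Wnn: "W t i j \<ge> 0" if "i \<in> {1..I}" "j \<in> {1..I}" for t i j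
    unfolding W_def using a_nonneg[OF that, of t] bspec[OF phi_pos[of t] that(2)] bspec[OF phi_pos[of "Suc t"] that(1)]
    by (intro divide_nonneg_pos mult_nonneg_nonneg) auto
  have Wrow: "(\<Sum>j\<in>{1..I}. W t i j) = 1" if "i \<in> {1..I}" for t i
  proof -
    have "(\<Sum>j\<in>{1..I}. W t i j) = (\<Sum>j\<in>{1..I}. a t i j * \<phi> t j) / \<phi> (Suc t) i"
      unfolding W_def by (simp add: sum_divide_distrib)
    also have "\<dots> = 1"
    proof -
      have "(\<Sum>j\<in>{1..I}. a t i j * \<phi> t j) > 0"
        using phi_upd[OF that, of t] bspec[OF phi_pos[of "Suc t"] that] by simp
      thus ?thesis using phi_upd[OF that, of t] by simp
    qed
    finally show ?thesis .
  qed
  have Wlow: "W t i j \<ge> w" if ij: "i \<in> {1..I}" "j \<in> {1..I}" and ak: "a t i j \<ge> \<kappa>" for t i j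
  proof -
    have ph': "\<phi> (Suc t) i > 0" "\<phi> (Suc t) i \<le> real I" using phi_pos[of "Suc t"] phi_ub[OF ij(1), of "Suc t"] p_pos ij by auto
    have "\<kappa> * p \<le> a t i j * \<phi> t j"
      using ak phi_lb[OF ij(2), of t] kappa_pos p_pos by (intro mult_mono) auto
    moreover have "\<kappa> * p / real I \<le> \<kappa> * p / \<phi> (Suc t) i"
      using ph' kappa_pos p_pos by (intro divide_left_mono) auto
    moreover have "\<kappa> * p / \<phi> (Suc t) i \<le> a t i j * \<phi> t j / \<phi> (Suc t) i"
      using calculation(1) ph' by (intro divide_right_mono) auto
    ultimately have "\<kappa> * p / real I \<le> a t i j * \<phi> t j / \<phi> (Suc t) i" by linarith
    thus ?thesis by (simp add: W_def w_def)
  qed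
  have Wedge: "W t i j \<ge> w" if "i \<in> {1..I}" "j \<in> {1..I}" "(j, i) \<in> E t" for t i j
    using Wlow[OF that(1,2) a_edge[OF that]] .
  have Wdiag: "W t i i \<ge> w" if "i \<in> {1..I}" for t i
    using Wlow[OF that that a_diag[OF that]] .
  have w_pos: "w > 0" using kappa_pos p_pos I_ge2 by (simp add: w_def)
  have w_half: "w \<le> 1/2"
  proof -
    have "\<kappa> * p \<le> 1" using kappa_pos kap1 p_pos p1 by (intro mult_le_one) auto
    thus ?thesis using I_ge2 w_pos unfolding w_def by (simp add: divide_simps)
  qed
  have w2: "2 * w ^ T \<le> 1"
  proof -
    have "w ^ T \<le> w ^ 1" using w_pos w_half T1 by (intro power_decreasing) auto
    thus ?thesis using w_half by simp
  qed
  have xt_in: "xt k i \<in> X" if "i \<in> {1..I}" for k i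
    using xt_def[OF that, of k] by (simp add: is_arg_min_def)
  have x_W: "x (Suc k) i = (\<Sum>j\<in>{1..I}. W k i j *\<^sub>R (x k j + \<gamma> k *\<^sub>R (xt k j - x k j)))"
    if "i \<in> {1..I}" for k i
    unfolding x_upd[OF that] W_def by (simp add: scaleR_sum_right)
  have y_W: "y (Suc k) i = (\<Sum>j\<in>{1..I}. W k i j *\<^sub>R y k j)
      + (1 / \<phi> (Suc k) i) *\<^sub>R (gradf i (x (Suc k) i) - gradf i (x k i))"
    if "i \<in> {1..I}" for k i
    unfolding y_upd[OF that] W_def by (simp add: scaleR_sum_right)
  have x_in: "\<forall>i\<in>{1..I}. x k i \<in> X" for k
  proof (induction k)
    case 0 thus ?case using init_x by simp
  next
    case (Suc k)
    show ?case
    proof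
      fix i assume i: "i \<in> {1..I}"
      show "x (Suc k) i \<in> X" unfolding x_W[OF i]
      proof (rule convex_sum[OF finite_atLeastAtMost X_convex Wrow[OF i]])
        show "\<And>j. j \<in> {1..I} \<Longrightarrow> 0 \<le> W k i j" using Wnn[OF i] by blast
        fix j assume j: "j \<in> {1..I}"
        have "x k j + \<gamma> k *\<^sub>R (xt k j - x k j) = (1 - \<gamma> k) *\<^sub>R x k j + \<gamma> k *\<^sub>R xt k j"
          by (simp add: algebra_simps)
        also have "\<dots> \<in> X"
          using X_convex Suc j xt_in[OF j, of k] A3_range[of k] by (intro convexD) auto
        finally show "x k j + \<gamma> k *\<^sub>R (xt k j - x k j) \<in> X" .
      qed
    qed
  qed
  have cons: "(\<Sum>i\<in>{1..I}. \<phi> k i *\<^sub>R y k i) = (\<Sum>i\<in>{1..I}. gradf i (x k i))" for k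
  proof (induction k)
    case 0 thus ?case using init_phi init_y by simp
  next
    case (Suc k)
    have e1: "\<phi> (Suc k) i *\<^sub>R y (Suc k) i = (\<Sum>j\<in>{1..I}. (a k i j * \<phi> k j) *\<^sub>R y k j)
        + (gradf i (x (Suc k) i) - gradf i (x k i))" if i: "i \<in> {1..I}" for i
      using bspec[OF phi_pos[of "Suc k"] i] unfolding y_upd[OF i] by (simp add: scaleR_add_right)
    have "(\<Sum>i\<in>{1..I}. \<Sum>j\<in>{1..I}. (a k i j * \<phi> k j) *\<^sub>R y k j)
        = (\<Sum>j\<in>{1..I}. \<Sum>i\<in>{1..I}. (a k i j * \<phi> k j) *\<^sub>R y k j)" by (rule sum.swap)
    also have "\<dots> = (\<Sum>j\<in>{1..I}. (\<Sum>i\<in>{1..I}. a k i j * \<phi> k j) *\<^sub>R y k j)"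
      by (simp add: scaleR_sum_left)
    also have "\<dots> = (\<Sum>j\<in>{1..I}. \<phi> k j *\<^sub>R y k j)"
      using a_colstoch by (simp add: sum_distrib_right[symmetric])
    finally have e2: "(\<Sum>i\<in>{1..I}. \<Sum>j\<in>{1..I}. (a k i j * \<phi> k j) *\<^sub>R y k j) = (\<Sum>j\<in>{1..I}. \<phi> k j *\<^sub>R y k j)" .
    have "(\<Sum>i\<in>{1..I}. \<phi> (Suc k) i *\<^sub>R y (Suc k) i)
        = (\<Sum>i\<in>{1..I}. \<Sum>j\<in>{1..I}. (a k i j * \<phi> k j) *\<^sub>R y k j)
          + (\<Sum>i\<in>{1..I}. gradf i (x (Suc k) i) - gradf i (x k i))"
      using e1 by (simp add: sum.distrib)
    also have "\<dots> = (\<Sum>i\<in>{1..I}. gradf i (x (Suc k) i))"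
      using e2 Suc by (simp add: sum_subtractf)
    finally show ?case .
  qed
  define Ls where "Ls = (\<Sum>i\<in>{1..I}. L i)"
  have L_nn: "L i \<ge> 0" if "i \<in> {1..I}" for i using lipschitz_on_nonneg[OF f_lip[OF that]] .
  have L_le: "L i \<le> Ls" if "i \<in> {1..I}" for i
    unfolding Ls_def by (rule member_le_sum) (use that L_nn in auto)
  have Ls_nn: "Ls \<ge> 0" unfolding Ls_def by (rule sum_nonneg) (use L_nn in auto)
  define c\<tau> where "c\<tau> = (\<Sum>i\<in>{1..I}. 4 / tau i)"
  have tau4: "0 \<le> 4 / tau j" if "j \<in> {1..I}" for j using tau_pos[OF that] by simp
  have tau_le: "4 / tau i \<le> c\<tau>" if "i \<in> {1..I}" for i
    unfolding c\<tau>_def by (rule member_le_sum) (use that tau4 in auto)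
  have ctau_nn: "c\<tau> \<ge> 0" unfolding c\<tau>_def by (rule sum_nonneg) (use tau4 in auto)
  have x01: "x 0 1 \<in> X" using init_x oneV by (simp add: V_def)
  have LG_nn: "L_G \<ge> 0"
  proof -
    obtain \<xi> where "\<forall>z\<in>U. G z \<ge> G (x 0 1) + \<xi> \<bullet> (z - x 0 1)"
      using subgrad_exists[OF G_convex U_open] x01 XU by blast
    hence "\<xi> \<in> subdiff U G (x 0 1)" by (simp add: subdiff_def)
    from A2[OF x01 this] show ?thesis using norm_ge_zero[of \<xi>] by linarith
  qed
  have LF_nn: "L_F \<ge> 0" using A1[OF x01] norm_ge_zero[of "\<Sum>i\<in>{1..I}. gradf i (x 0 1)"] by linarith
  define Mb where "Mb Bx By = c\<tau> * (real I * By + Ls * Bx + L_F + L_G)" for Bx By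
  define H where "H k Bx By \<longleftrightarrow> (\<forall>i\<in>{1..I}. \<forall>l\<in>{1..I}. norm (x k i - x k l) \<le> Bx \<and> norm (y k i - y k l) \<le> By)"
    for k Bx By
  define ybar where "ybar k = (1 / real I) *\<^sub>R (\<Sum>j\<in>{1..I}. \<phi> k j *\<^sub>R y k j)" for k
  have ydev: "norm (y k i - ybar k) \<le> By" if "i \<in> {1..I}" "H k Bx By" for k i Bx By
    unfolding ybar_def
    by (rule avg_dev[where c = "\<phi> k"]) (use that phi_pos phi_sum I_ge2 in \<open>auto simp: H_def less_imp_le\<close>)
  have ybound: "norm (y k i) \<le> By + (L_F + Ls * Bx) / real I" if i: "i \<in> {1..I}" and h: "H k Bx By" for k i Bx By
  proof -
    have x1: "x k 1 \<in> X" using x_in oneV by (simp add: V_def)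
    have "norm (\<Sum>j\<in>{1..I}. gradf j (x k j)) \<le> L_F + Ls * Bx"
    proof -
      have "(\<Sum>j\<in>{1..I}. gradf j (x k j)) = (\<Sum>j\<in>{1..I}. gradf j (x k 1)) + (\<Sum>j\<in>{1..I}. gradf j (x k j) - gradf j (x k 1))"
        by (simp add: sum_subtractf)
      also have "norm \<dots> \<le> norm (\<Sum>j\<in>{1..I}. gradf j (x k 1)) + norm (\<Sum>j\<in>{1..I}. gradf j (x k j) - gradf j (x k 1))"
        by (rule norm_triangle_ineq)
      also have "norm (\<Sum>j\<in>{1..I}. gradf j (x k j) - gradf j (x k 1)) \<le> (\<Sum>j\<in>{1..I}. L j * Bx)"
      proof -
        have "norm (\<Sum>j\<in>{1..I}. gradf j (x k j) - gradf j (x k 1)) \<le> (\<Sum>j\<in>{1..I}. norm (gradf j (x k j) - gradf j (x k 1)))"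
          by (rule norm_sum)
        also have "\<dots> \<le> (\<Sum>j\<in>{1..I}. L j * Bx)"
        proof (rule sum_mono)
          fix j assume j: "j \<in> {1..I}"
          have "norm (gradf j (x k j) - gradf j (x k 1)) \<le> L j * norm (x k j - x k 1)"
            using lipschitz_onD[OF f_lip[OF j], of "x k j" "x k 1"] x_in j x1 by (simp add: dist_norm)
          also have "\<dots> \<le> L j * Bx" using h j oneV L_nn[OF j] by (intro mult_left_mono) (auto simp: H_def V_def)
          finally show "norm (gradf j (x k j) - gradf j (x k 1)) \<le> L j * Bx" .
        qed
        finally show ?thesis .
      qed
      also have "(\<Sum>j\<in>{1..I}. L j * Bx) = Ls * Bx" by (simp add: Ls_def sum_distrib_right)
      finally show ?thesis using A1[OF x1] by simp
    qed
    hence "norm (ybar k) \<le> (L_F + Ls * Bx) / real I"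
      unfolding ybar_def cons using I_ge2 by (simp add: divide_simps)
    moreover have "norm (y k i) \<le> norm (y k i - ybar k) + norm (ybar k)"
      using norm_triangle_ineq[of "y k i - ybar k" "ybar k"] by simp
    ultimately show ?thesis using ydev[OF i h] by linarith
  qed
  have Mbound: "norm (x k i - xt k i) \<le> Mb Bx By" if i: "i \<in> {1..I}" and h: "H k Bx By" for k i Bx By
  proof -
    have xk: "x k i \<in> X" using x_in i by blast
    have d: "((\<lambda>z. ft i z (x k i)) has_derivative (\<lambda>h. gradf i (x k i) \<bullet> h)) (at (x k i))"
      using ft_deriv[OF i xk, of "x k i"] ft_grad_cons[OF i xk] xk XU by auto
    have "norm (x k i - xt k i) \<le> 4 / tau i * (norm (real I *\<^sub>R y k i) + L_G)"
      by (rule xt_bound[OF X_convex XU U_open G_convex xk tau_pos[OF i] ft_sc[OF i xk] d xt_def[OF i] A2[OF xk]])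
    also have "\<dots> \<le> c\<tau> * (norm (real I *\<^sub>R y k i) + L_G)"
      using tau_le[OF i] LG_nn by (intro mult_right_mono) auto
    also have "\<dots> \<le> c\<tau> * (real I * (By + (L_F + Ls * Bx) / real I) + L_G)"
      using ybound[OF i h] ctau_nn I_ge2 by (intro mult_left_mono) auto
    also have "\<dots> = Mb Bx By" using I_ge2 by (simp add: Mb_def field_simps)
    finally show ?thesis .
  qed
  have xrec: "norm (x (Suc t) i - (\<Sum>j\<in>{1..I}. W t i j *\<^sub>R x t j)) \<le> \<gamma> t * Mb Bx By"
    if i: "i \<in> {1..I}" and h: "H t Bx By" for t i Bx By
  proof -
    have "x (Suc t) i - (\<Sum>j\<in>{1..I}. W t i j *\<^sub>R x t j) = (\<Sum>j\<in>{1..I}. W t i j *\<^sub>R (\<gamma> t *\<^sub>R (xt t j - x t j)))"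
      unfolding x_W[OF i] by (simp add: scaleR_add_right sum.distrib)
    also have "norm \<dots> \<le> \<gamma> t * Mb Bx By"
    proof (rule wavg_norm[OF finite_atLeastAtMost])
      show "\<And>j. j \<in> {1..I} \<Longrightarrow> 0 \<le> W t i j" using Wnn[OF i] by blast
      show "(\<Sum>j\<in>{1..I}. W t i j) = 1" by (rule Wrow[OF i])
      fix j assume j: "j \<in> {1..I}"
      have "norm (\<gamma> t *\<^sub>R (xt t j - x t j)) = \<gamma> t * norm (x t j - xt t j)"
        using A3_range[of t] by (simp add: norm_minus_commute)
      also have "\<dots> \<le> \<gamma> t * Mb Bx By" using Mbound[OF j h] A3_range[of t] by (intro mult_left_mono) auto
      finally show "norm (\<gamma> t *\<^sub>R (xt t j - x t j)) \<le> \<gamma> t * Mb Bx By" .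
    qed
    finally show ?thesis .
  qed
  have xdiff: "norm (x (Suc t) i - x t i) \<le> Bx + \<gamma> t * Mb Bx By"
    if i: "i \<in> {1..I}" and h: "H t Bx By" for t i Bx By
  proof -
    have e: "x (Suc t) i - x t i = (x (Suc t) i - (\<Sum>j\<in>{1..I}. W t i j *\<^sub>R x t j)) + (\<Sum>j\<in>{1..I}. W t i j *\<^sub>R (x t j - x t i))"
    proof -
      have "(\<Sum>j\<in>{1..I}. W t i j *\<^sub>R (x t j - x t i)) = (\<Sum>j\<in>{1..I}. W t i j *\<^sub>R x t j) - (\<Sum>j\<in>{1..I}. W t i j) *\<^sub>R x t i"
        by (simp add: scaleR_diff_right sum_subtractf scaleR_sum_left)
      thus ?thesis using Wrow[OF i, of t] by simp
    qed
    have "norm (\<Sum>j\<in>{1..I}. W t i j *\<^sub>R (x t j - x t i)) \<le> Bx"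
      by (rule wavg_norm[OF finite_atLeastAtMost]) (use Wnn[OF i] Wrow[OF i] h i in \<open>auto simp: H_def\<close>)
    moreover have "norm (x (Suc t) i - x t i) \<le> norm (x (Suc t) i - (\<Sum>j\<in>{1..I}. W t i j *\<^sub>R x t j)) + norm (\<Sum>j\<in>{1..I}. W t i j *\<^sub>R (x t j - x t i))"
      unfolding e by (rule norm_triangle_ineq)
    ultimately show ?thesis using xrec[OF i h] by linarith
  qed
  define Ly where "Ly = Ls / p"
  have Ly_nn: "Ly \<ge> 0" using Ls_nn p_pos by (simp add: Ly_def)
  have yrec: "norm (y (Suc t) i - (\<Sum>j\<in>{1..I}. W t i j *\<^sub>R y t j)) \<le> Ly * (Bx + \<gamma> t * Mb Bx By)"
    if i: "i \<in> {1..I}" and h: "H t Bx By" for t i Bx By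
  proof -
    have ph: "\<phi> (Suc t) i \<ge> p" "\<phi> (Suc t) i > 0" using phi_lb[OF i, of "Suc t"] p_pos by auto
    have nn: "0 \<le> Bx + \<gamma> t * Mb Bx By" using xdiff[OF i h] norm_ge_zero[of "x (Suc t) i - x t i"] by linarith
    have "y (Suc t) i - (\<Sum>j\<in>{1..I}. W t i j *\<^sub>R y t j) = (1 / \<phi> (Suc t) i) *\<^sub>R (gradf i (x (Suc t) i) - gradf i (x t i))"
      using y_W[OF i] by simp
    hence "norm (y (Suc t) i - (\<Sum>j\<in>{1..I}. W t i j *\<^sub>R y t j)) = norm (gradf i (x (Suc t) i) - gradf i (x t i)) / \<phi> (Suc t) i"
      using ph by simp
    also have "\<dots> \<le> (L i * norm (x (Suc t) i - x t i)) / \<phi> (Suc t) i"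
      using lipschitz_onD[OF f_lip[OF i], of "x (Suc t) i" "x t i"] x_in i ph by (intro divide_right_mono) (auto simp: dist_norm)
    also have "\<dots> \<le> (Ls * (Bx + \<gamma> t * Mb Bx By)) / \<phi> (Suc t) i"
      using L_le[OF i] L_nn[OF i] xdiff[OF i h] ph Ls_nn by (intro divide_right_mono mult_mono) auto
    also have "\<dots> \<le> (Ls * (Bx + \<gamma> t * Mb Bx By)) / p"
      using ph p_pos Ls_nn nn by (intro divide_left_mono) auto
    finally show ?thesis by (simp add: Ly_def)
  qed
  define \<delta> where "\<delta> = 2 * w ^ T"
  have d_pos: "\<delta> > 0" using w_pos by (simp add: \<delta>_def)
  define C where "C = 4 * real T * Ly / \<delta> + 1"
  have C1: "C \<ge> 1" using Ly_nn d_pos by (simp add: C_def)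
  have dC: "\<delta> * C = 4 * real T * Ly + \<delta>" using d_pos by (simp add: C_def field_simps)
  define \<alpha> where "\<alpha> = c\<tau> * (real I * C + Ls)"
  define \<beta> where "\<beta> = c\<tau> * (L_F + L_G)"
  define Q where "Q = \<alpha> + \<beta>"
  have a_nn: "\<alpha> \<ge> 0" using ctau_nn C1 Ls_nn by (simp add: \<alpha>_def)
  have b_nn: "\<beta> \<ge> 0" using ctau_nn LF_nn LG_nn by (simp add: \<beta>_def)
  have Q_nn: "Q \<ge> 0" using a_nn b_nn by (simp add: Q_def)
  define A where "A = 2 * real T * Q * (1 + Ly)"
  have TQ_nn: "0 \<le> A" using Q_nn Ly_nn by (simp add: A_def)
  define g where "g = \<delta> / (2 * (A + 1))"
  have den: "0 < 2 * (A + 1)"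
  proof -
    have "0 < A + 1" by (rule add_nonneg_pos[OF TQ_nn]) simp
    thus ?thesis by simp
  qed
  have g_pos: "g > 0" unfolding g_def using d_pos den by (rule divide_pos_pos)
  have g_eq: "g * (2 * (A + 1)) = \<delta>" unfolding g_def using den by simp
  have gA: "g * A \<le> \<delta> / 2"
  proof -
    have "g * (2 * (A + 1)) = 2 * (g * A) + 2 * g" by (simp add: algebra_simps)
    thus ?thesis using g_eq g_pos by linarith
  qed
  have gA_nn: "0 \<le> g * A" using g_pos TQ_nn by simp
  have gQ1: "2 * real T * g * Q \<le> \<delta> / 2"
  proof -
    have "2 * real T * g * Q * 1 \<le> 2 * real T * g * Q * (1 + Ly)"
      using Ly_nn g_pos Q_nn by (intro mult_left_mono) auto
    also have "2 * real T * g * Q * (1 + Ly) = g * A" by (simp add: A_def)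
    finally show ?thesis using gA by simp
  qed
  have gQ2: "2 * real T * Ly * g * Q \<le> \<delta> / 2"
  proof -
    have "2 * real T * Ly * g * Q = 2 * real T * g * Q * Ly" by simp
    also have "\<dots> \<le> 2 * real T * g * Q * (1 + Ly)"
      using Ly_nn g_pos Q_nn by (intro mult_left_mono) auto
    also have "2 * real T * g * Q * (1 + Ly) = g * A" by (simp add: A_def)
    finally show ?thesis using gA by simp
  qed
  have lim2: "(\<lambda>k. (\<gamma> k)\<^sup>2) \<longlonglongrightarrow> 0" using summable_LIMSEQ_zero[OF A3_sq] .
  have "g\<^sup>2 > 0" using g_pos by simp
  from order_tendstoD(2)[OF lim2 this]
  obtain K0 where K0: "\<And>t. t \<ge> K0 \<Longrightarrow> (\<gamma> t)\<^sup>2 < g\<^sup>2" unfolding eventually_sequentially by blast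
  have gam_le: "\<gamma> t \<le> g" if "t \<ge> K0" for t using power2_less_imp_less[OF K0[OF that]] g_pos by simp
  define F where "F q = norm (x (fst q) (fst (snd q)) - x (fst q) (snd (snd q)))
      + norm (y (fst q) (fst (snd q)) - y (fst q) (snd (snd q))) / C" for q
  define Bx where "Bx = 1 + (\<Sum>q\<in>{..K0 + T} \<times> ({1..I} \<times> {1..I}). F q)"
  define By where "By = C * Bx"
  have F_nn: "F q \<ge> 0" for q using C1 by (simp add: F_def)
  have Bx1: "Bx \<ge> 1" unfolding Bx_def using F_nn by (simp add: sum_nonneg)
  have Mb_eq: "Mb Bx By = \<alpha> * Bx + \<beta>" by (simp add: Mb_def By_def \<alpha>_def \<beta>_def algebra_simps)
  have bB: "\<beta> \<le> \<beta> * Bx" using mult_left_mono[OF Bx1 b_nn] by simp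
  have Mb_le: "Mb Bx By \<le> Q * Bx"
  proof -
    have "Mb Bx By = \<alpha> * Bx + \<beta>" by (rule Mb_eq)
    also have "\<dots> \<le> \<alpha> * Bx + \<beta> * Bx" using bB by (rule add_left_mono)
    also have "\<dots> = Q * Bx" by (simp add: Q_def distrib_right)
    finally show ?thesis .
  qed
  have Mb_nn: "Mb Bx By \<ge> 0"
  proof -
    have "0 \<le> \<alpha> * Bx" using a_nn Bx1 by simp
    hence "0 \<le> \<alpha> * Bx + \<beta>" using b_nn by (rule add_nonneg_nonneg)
    thus ?thesis using Mb_eq by simp
  qed
  have Hall: "H k Bx By" for k
  proof (induction k rule: less_induct)
    case (less k)
    show ?case
    proof (cases "k \<le> K0 + T")
      case True
      show ?thesis unfolding H_def
      proof (intro ballI conjI)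
        fix i l assume i: "i \<in> {1..I}" and l: "l \<in> {1..I}"
        have "F (k, i, l) \<le> (\<Sum>q\<in>{..K0 + T} \<times> ({1..I} \<times> {1..I}). F q)"
          by (rule member_le_sum) (use True i l F_nn in auto)
        hence Fb: "F (k, i, l) \<le> Bx" by (simp add: Bx_def)
        have yb: "norm (y k i - y k l) / C \<ge> 0" using C1 by simp
        show "norm (x k i - x k l) \<le> Bx" using Fb yb by (simp add: F_def)
        have Fe: "F (k, i, l) = norm (x k i - x k l) + norm (y k i - y k l) / C" by (simp add: F_def)
        have "norm (y k i - y k l) / C \<le> Bx" using Fb Fe norm_ge_zero[of "x k i - x k l"] by linarith
        thus "norm (y k i - y k l) \<le> By" using C1 by (simp add: By_def field_simps)
      qed
    next
      case False
      define k' where "k' = k - T"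
      have k'1: "k = k' + T" and k'2: "k' \<ge> K0" using False by (auto simp: k'_def)
      have Ht: "H t Bx By" if "t < k" for t using less.IH[OF that] .
      have Hk': "H k' Bx By" using Ht T1 k'1 by simp
      define ex where "ex t = Max ((\<lambda>i. norm (x (Suc t) i - (\<Sum>j\<in>{1..I}. W t i j *\<^sub>R x t j))) ` {1..I})" for t
      define ey where "ey t = Max ((\<lambda>i. norm (y (Suc t) i - (\<Sum>j\<in>{1..I}. W t i j *\<^sub>R y t j))) ` {1..I})" for t
      have exr: "norm (x (Suc t) i - (\<Sum>j\<in>{1..I}. W t i j *\<^sub>R x t j)) \<le> ex t" if "i \<in> {1..I}" for t i
        unfolding ex_def by (rule Max_ge) (use that in auto)
      have eyr: "norm (y (Suc t) i - (\<Sum>j\<in>{1..I}. W t i j *\<^sub>R y t j)) \<le> ey t" if "i \<in> {1..I}" for t i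
        unfolding ey_def by (rule Max_ge) (use that in auto)
      have exb: "ex (k' + d) \<le> g * Mb Bx By" if "d < T" for d
      proof -
        have t: "k' + d < k" "k' + d \<ge> K0" using that k'1 k'2 by auto
        have "ex (k' + d) \<le> \<gamma> (k' + d) * Mb Bx By"
          unfolding ex_def using xrec[OF _ Ht[OF t(1)]] I_ge2 by (subst Max_le_iff) auto
        also have "\<dots> \<le> g * Mb Bx By" using gam_le[OF t(2)] Mb_nn by (intro mult_right_mono) auto
        finally show ?thesis .
      qed
      have eyb: "ey (k' + d) \<le> Ly * (Bx + g * Mb Bx By)" if "d < T" for d
      proof -
        have t: "k' + d < k" "k' + d \<ge> K0" using that k'1 k'2 by auto
        have "ey (k' + d) \<le> Ly * (Bx + \<gamma> (k' + d) * Mb Bx By)"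
          unfolding ey_def using yrec[OF _ Ht[OF t(1)]] I_ge2 by (subst Max_le_iff) auto
        also have "\<dots> \<le> Ly * (Bx + g * Mb Bx By)"
          using gam_le[OF t(2)] Mb_nn Ly_nn by (intro mult_left_mono add_left_mono mult_right_mono) auto
        finally show ?thesis .
      qed
      have sx: "(\<Sum>d<T. ex (k' + d)) \<le> real T * (g * Mb Bx By)"
        using sum_mono[of "{..<T}" "\<lambda>d. ex (k' + d)" "\<lambda>d. g * Mb Bx By"] exb by simp
      have sy: "(\<Sum>d<T. ey (k' + d)) \<le> real T * (Ly * (Bx + g * Mb Bx By))"
        using sum_mono[of "{..<T}" "\<lambda>d. ey (k' + d)" "\<lambda>d. Ly * (Bx + g * Mb Bx By)"] eyb by simp
      have TgM: "2 * (real T * (g * Mb Bx By)) \<le> \<delta> / 2 * Bx"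
      proof -
        have "2 * (real T * (g * Mb Bx By)) \<le> 2 * real T * g * (Q * Bx)"
          using Mb_le g_pos by (simp add: mult_left_mono)
        also have "\<dots> = (2 * real T * g * Q) * Bx" by simp
        also have "\<dots> \<le> \<delta> / 2 * Bx" using gQ1 Bx1 by (intro mult_right_mono) auto
        finally show ?thesis .
      qed
      have TLgM: "2 * (real T * (Ly * (g * Mb Bx By))) \<le> \<delta> / 2 * Bx"
      proof -
        have "2 * (real T * (Ly * (g * Mb Bx By))) \<le> 2 * real T * Ly * g * (Q * Bx)"
          using Mb_le g_pos Ly_nn by (simp add: mult_left_mono)
        also have "\<dots> = (2 * real T * Ly * g * Q) * Bx" by simp
        also have "\<dots> \<le> \<delta> / 2 * Bx" using gQ2 Bx1 by (intro mult_right_mono) auto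
        finally show ?thesis .
      qed
      have dBx: "\<delta> * Bx \<ge> 0" using d_pos Bx1 by simp
      have TLB: "real T * Ly * Bx \<ge> 0" using Ly_nn Bx1 by simp
      have dBy: "\<delta> * By = 4 * (real T * Ly * Bx) + \<delta> * Bx"
      proof -
        have "\<delta> * By = (\<delta> * C) * Bx" by (simp add: By_def)
        also have "\<dots> = 4 * (real T * Ly * Bx) + \<delta> * Bx" unfolding dC by (simp add: algebra_simps)
        finally show ?thesis .
      qed
      show ?thesis unfolding H_def
      proof (intro ballI conjI)
        fix i l assume i: "i \<in> {1..I}" and l: "l \<in> {1..I}"
        have "norm (x (k' + T) i - x (k' + T) l) \<le> (1 - 2 * w ^ T) * Bx + 2 * (\<Sum>d<T. ex (k' + d))"
          by (rule consensus_vec[where W = W and E = E and n = I and w = w, OF Wnn Wedge Wdiag Wrow _ w2 exr _ full i l])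
             (use w_pos Hk' in \<open>auto simp: H_def\<close>)
        also have "\<dots> \<le> (1 - 2 * w ^ T) * Bx + \<delta> / 2 * Bx"
        proof (rule add_left_mono)
          show "2 * (\<Sum>d<T. ex (k' + d)) \<le> \<delta> / 2 * Bx" using sx TgM by linarith
        qed
        also have "\<dots> = Bx - w ^ T * Bx" by (simp add: \<delta>_def algebra_simps)
        also have "\<dots> \<le> Bx" using w_pos Bx1 by simp
        finally show "norm (x k i - x k l) \<le> Bx" using k'1 by simp
        have "norm (y (k' + T) i - y (k' + T) l) \<le> (1 - 2 * w ^ T) * By + 2 * (\<Sum>d<T. ey (k' + d))"
          by (rule consensus_vec[where W = W and E = E and n = I and w = w, OF Wnn Wedge Wdiag Wrow _ w2 eyr _ full i l])
             (use w_pos Hk' in \<open>auto simp: H_def\<close>)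
        also have "\<dots> \<le> (1 - 2 * w ^ T) * By + (2 * (real T * Ly * Bx) + \<delta> / 2 * Bx)"
        proof (rule add_left_mono)
          have "2 * (\<Sum>d<T. ey (k' + d)) \<le> 2 * (real T * (Ly * (Bx + g * Mb Bx By)))" using sy by simp
          also have "\<dots> = 2 * (real T * Ly * Bx) + 2 * (real T * (Ly * (g * Mb Bx By)))"
            by (simp add: algebra_simps)
          also have "\<dots> \<le> 2 * (real T * Ly * Bx) + \<delta> / 2 * Bx" using TLgM by (rule add_left_mono)
          finally show "2 * (\<Sum>d<T. ey (k' + d)) \<le> 2 * (real T * Ly * Bx) + \<delta> / 2 * Bx" .
        qed
        also have "\<dots> = By - (\<delta> * By - 2 * (real T * Ly * Bx) - \<delta> / 2 * Bx)"
        proof -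
          have e: "(1 - 2 * w ^ T) * By = By - \<delta> * By" unfolding \<delta>_def by (simp add: left_diff_distrib)
          show ?thesis unfolding e by (simp add: algebra_simps)
        qed
        also have "\<dots> \<le> By"
        proof -
          have "\<delta> * By - 2 * (real T * Ly * Bx) - \<delta> / 2 * Bx = 2 * (real T * Ly * Bx) + \<delta> / 2 * Bx"
            using dBy by simp
          moreover have "0 \<le> 2 * (real T * Ly * Bx) + \<delta> / 2 * Bx" using TLB dBx by simp
          ultimately show ?thesis by linarith
        qed
        finally show "norm (y k i - y k l) \<le> By" using k'1 by simp
      qed
    qed
  qed
  have partB: "\<forall>i\<in>{1..I}. bdd_above (range (\<lambda>k.
          norm (y k i - (1 / real I) *\<^sub>R (\<Sum>j\<in>{1..I}. \<phi> k j *\<^sub>R y k j))))"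
  proof
    fix i assume i: "i \<in> {1..I}"
    show "bdd_above (range (\<lambda>k. norm (y k i - (1 / real I) *\<^sub>R (\<Sum>j\<in>{1..I}. \<phi> k j *\<^sub>R y k j))))"
      by (rule bdd_aboveI2[where M = By]) (use ydev[OF i Hall] in \<open>simp add: ybar_def\<close>)
  qed
  have partC: "\<forall>i\<in>{1..I}. bdd_above (range (\<lambda>k. norm (x k i - xt k i)))"
  proof
    fix i assume i: "i \<in> {1..I}"
    show "bdd_above (range (\<lambda>k. norm (x k i - xt k i)))"
      by (rule bdd_aboveI2[where M = "Mb Bx By"]) (use Mbound[OF i Hall] in simp)
  qed
  show ?thesis by (rule conjI[OF partA conjI[OF partB partC]])
qed


end
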